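(* Let $p$ be a prime and $\Gamma_p=T^{p-1}\rtimes_\rho C_p$. Then: (1) for every $t\in T^{p-1}$ the element $ta$ has order $p$, and the subgroup $\langle ta\rangle$ is conjugate in $\Gamma_p$ to $C_p=\langle a\rangle$; (2) the centre of $\Gamma_p$ is $Z(\Gamma_p)=\langle(\xi_p,\xi_p^2,\dots,\xi_p^{p-1})\rangle\le T^{p-1}$, where $\xi_p=e^{2\pi\sqrt{-1}/p}$; (3) the normaliser of $C_p$ in $\Gamma_p$ is $N_{\Gamma_p}(C_p)=Z(\Gamma_p)\times C_p$.
   Context: Let $a$ be a fixed generator of $C_p$. $\Gamma_p=T^{p-1}\rtimes_\rho C_p$ is the semidirect product in which $a t a^{-1}=\rho(a)(t)$, where for $t=(t_1,\dots,t_{p-1})\in T^{p-1}$, $\rho(a)(t)=(t_{p-1}^{-1},\,t_1t_{p-1}^{-1},\,t_2t_{p-1}^{-1},\dots,t_{p-2}t_{p-1}^{-1})$. *)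

theory Defs
  imports "HOL-Analysis.Analysis" "HOL-Algebra.Algebra"
begin

definition torus :: "nat \<Rightarrow> (nat \<Rightarrow> complex) set" where
  "torus p = {t. (\<forall>i\<in>{1..p-1}. cmod (t i) = 1) \<and> (\<forall>i. i \<notin> {1..p-1} \<longrightarrow> t i = 1)}"

definition rho :: "nat \<Rightarrow> (nat \<Rightarrow> complex) \<Rightarrow> (nat \<Rightarrow> complex)" where
  "rho p t = (\<lambda>i. if i = 1 then inverse (t (p-1))
                 else if 2 \<le> i \<and> i \<le> p-1 then t (i-1) * inverse (t (p-1))
                 else 1)"

text \<open>Gamma_p = T^{p-1> \<rtimes>_rho C_p.  The pair (t, k) with k < p stands for t a^k,
  and a t a^{-1} = rho(a)(t), so (t a^j)(s a^k) = (t \<cdot> rho(a)^j(s)) a^{j+k}.\<close>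
definition Gamma :: "nat \<Rightarrow> ((nat \<Rightarrow> complex) \<times> nat) monoid" where
  "Gamma p = \<lparr> carrier = torus p \<times> {..<p},
     mult = (\<lambda>(t, j) (s, k). (\<lambda>i. t i * ((rho p ^^ j) s) i, (j + k) mod p)),
     one = (\<lambda>_. 1, 0) \<rparr>"

definition gen_a :: "(nat \<Rightarrow> complex) \<times> nat" where
  "gen_a = (\<lambda>_. 1, 1)"

definition Cp :: "nat \<Rightarrow> ((nat \<Rightarrow> complex) \<times> nat) set" where
  "Cp p = generate (Gamma p) {gen_a}"

definition center :: "('a, 'b) monoid_scheme \<Rightarrow> 'a set" where
  "center G = {z \<in> carrier G. \<forall>g \<in> carrier G. z \<otimes>\<^bsub>G\<^esub> g = g \<otimes>\<^bsub>G\<^esub> z}"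

definition xi :: "nat \<Rightarrow> complex" where
  "xi p = exp (2 * pi * \<i> / of_nat p)"

definition zeta :: "nat \<Rightarrow> (nat \<Rightarrow> complex) \<times> nat" where
  "zeta p = ((\<lambda>i. if i \<in> {1..p-1} then xi p ^ i else 1), 0)"

end

theory Submission
  imports Defs
begin

definition E :: "nat \<Rightarrow> (nat \<Rightarrow> complex) \<Rightarrow> int \<Rightarrow> complex" where
  "E p t k = t (nat (k mod int p))"

definition CF :: "nat \<Rightarrow> nat \<Rightarrow> (nat \<Rightarrow> complex) \<Rightarrow> nat \<Rightarrow> complex" where
  "CF p j t = (\<lambda>i. if i \<in> {1..p-1} then E p t (int i - int j) * inverse (E p t (- int j)) else 1)"

lemma torus_norm: "t \<in> torus p \<Longrightarrow> cmod (t i) = 1"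
  unfolding torus_def by (cases "i \<in> {1..p-1}") auto

lemma torus_nz: "t \<in> torus p \<Longrightarrow> t i \<noteq> 0"
  using torus_norm[of t p i] by auto

lemma torus_out: "t \<in> torus p \<Longrightarrow> i \<notin> {1..p-1} \<Longrightarrow> t i = 1"
  unfolding torus_def by auto

lemma torus_0: "t \<in> torus p \<Longrightarrow> t 0 = 1"
  by (rule torus_out) auto

lemma torusI: "(\<And>i. cmod (t i) = 1) \<Longrightarrow> (\<And>i. i \<notin> {1..p-1} \<Longrightarrow> t i = 1) \<Longrightarrow> t \<in> torus p"
  unfolding torus_def by auto

lemma torus_mult: "s \<in> torus p \<Longrightarrow> t \<in> torus p \<Longrightarrow> (\<lambda>i. s i * t i) \<in> torus p"
  by (rule torusI) (auto simp: norm_mult torus_norm torus_out)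

lemma torus_inv: "t \<in> torus p \<Longrightarrow> (\<lambda>i. inverse (t i)) \<in> torus p"
  by (rule torusI) (auto simp: norm_inverse torus_norm torus_out)

lemma torus_one: "(\<lambda>_. 1) \<in> torus p"
  by (rule torusI) auto

lemma E_nz: "t \<in> torus p \<Longrightarrow> E p t k \<noteq> 0"
  unfolding E_def by (rule torus_nz)

lemma E_norm: "t \<in> torus p \<Longrightarrow> cmod (E p t k) = 1"
  unfolding E_def by (rule torus_norm)

lemma E_cong: "k mod int p = l mod int p \<Longrightarrow> E p t k = E p t l"
  unfolding E_def by simp

lemma CF_0: assumes "t \<in> torus p" "2 \<le> p" shows "CF p 0 t = t"
proof
  fix i show "CF p 0 t i = t i"
  proof (cases "i \<in> {1..p-1}")
    case True
    then have "int i mod int p = int i" by auto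
    then show ?thesis using True assms by (simp add: CF_def E_def torus_0)
  next
    case False
    then have "CF p 0 t i = 1" unfolding CF_def by auto
    then show ?thesis using False assms by (simp add: torus_out)
  qed
qed

lemma rho_CF: assumes "t \<in> torus p" "2 \<le> p" shows "rho p (CF p j t) = CF p (Suc j) t"
proof
  fix i
  have nz: "\<And>k. E p t k \<noteq> 0" using assms E_nz by blast
  have pm: "CF p j t (p-1) = E p t (-1 - int j) * inverse (E p t (- int j))"
  proof -
    have "(int (p-1) - int j) mod int p = (-1 - int j) mod int p"
    proof -
      have "int (p-1) - int j = (-1 - int j) + int p" using assms by simp
      then show ?thesis by (simp only: mod_add_self2)
    qed
    then have "E p t (int (p-1) - int j) = E p t (-1 - int j)" by (rule E_cong)
    moreover have "p - 1 \<in> {1..p-1}" using assms by auto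
    ultimately show ?thesis unfolding CF_def by simp
  qed
  show "rho p (CF p j t) i = CF p (Suc j) t i"
  proof -
    consider "i = 1" | "2 \<le> i \<and> i \<le> p-1" | "i \<notin> {1..p-1}" by force
    then show ?thesis
    proof cases
      case 1
      have "rho p (CF p j t) i = inverse (CF p j t (p-1))" using 1 by (simp add: rho_def)
      also have "\<dots> = E p t (- int j) * inverse (E p t (-1 - int j))"
        using pm nz by (simp add: inverse_mult_distrib mult.commute)
      also have "\<dots> = CF p (Suc j) t i" using 1 assms by (simp add: CF_def algebra_simps)
      finally show ?thesis .
    next
      case 2
      then have i1: "i - 1 \<in> {1..p-1}" and "int (i-1) = int i - 1" by auto
      then have a: "CF p j t (i-1) = E p t (int i - 1 - int j) * inverse (E p t (- int j))"
        unfolding CF_def by simp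
      have "rho p (CF p j t) i = CF p j t (i-1) * inverse (CF p j t (p-1))" using 2 by (simp add: rho_def)
      also have "\<dots> = E p t (int i - 1 - int j) * inverse (E p t (-1 - int j))"
        unfolding a pm using nz[of "- int j"] by (simp add: inverse_mult_distrib)
      also have "\<dots> = CF p (Suc j) t i" using 2 assms by (simp add: CF_def algebra_simps)
      finally show ?thesis .
    next
      case 3
      then show ?thesis by (auto simp: rho_def CF_def)
    qed
  qed
qed

lemma rho_pow_CF: assumes "t \<in> torus p" "2 \<le> p" shows "(rho p ^^ j) t = CF p j t"
  by (induction j) (auto simp: CF_0 rho_CF assms)

lemma CF_torus: assumes "t \<in> torus p" shows "CF p j t \<in> torus p"
  by (rule torusI) (auto simp: CF_def norm_mult norm_inverse E_norm assms)

lemma rho_pow_torus: "t \<in> torus p \<Longrightarrow> 2 \<le> p \<Longrightarrow> (rho p ^^ j) t \<in> torus p"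
  by (simp add: rho_pow_CF CF_torus)

lemma CF_mod: "CF p j t = CF p (j mod p) t"
proof
  fix i
  have 1: "E p t (int i - int j) = E p t (int i - int (j mod p))"
    by (rule E_cong) (simp add: zmod_int mod_diff_right_eq)
  have 2: "E p t (- int j) = E p t (- int (j mod p))"
    by (rule E_cong) (simp add: zmod_int mod_minus_eq)
  show "CF p j t i = CF p (j mod p) t i" unfolding CF_def 1 2 ..
qed

lemma rho_pow_mod: "t \<in> torus p \<Longrightarrow> 2 \<le> p \<Longrightarrow> (rho p ^^ j) t = (rho p ^^ (j mod p)) t"
  by (simp add: rho_pow_CF CF_mod[of p j])

lemma rho_pow_mult: assumes "s \<in> torus p" "t \<in> torus p" "2 \<le> p"
  shows "(rho p ^^ j) (\<lambda>i. s i * t i) = (\<lambda>i. (rho p ^^ j) s i * (rho p ^^ j) t i)"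
  using assms torus_mult[OF assms(1,2)]
  by (simp add: rho_pow_CF CF_def E_def inverse_mult_distrib fun_eq_iff)

lemma rho_one: "rho p (\<lambda>_. 1) = (\<lambda>_. 1)"
  by (simp add: rho_def fun_eq_iff)

lemma rho_pow_one: "(rho p ^^ j) (\<lambda>_. 1) = (\<lambda>_. 1)"
  by (induction j) (simp_all add: rho_one)

lemma rho_pow_fix: "rho p t = t \<Longrightarrow> (rho p ^^ j) t = t"
  by (induction j) simp_all

lemma Gamma_mult: "(t, j) \<otimes>\<^bsub>Gamma p\<^esub> (s, k) = (\<lambda>i. t i * (rho p ^^ j) s i, (j + k) mod p)"
  by (simp add: Gamma_def)

lemma Gamma_one: "\<one>\<^bsub>Gamma p\<^esub> = (\<lambda>_. 1, 0)"
  by (simp add: Gamma_def)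

lemma Gamma_carrier: "carrier (Gamma p) = torus p \<times> {..<p}"
  by (simp add: Gamma_def)

lemma group_Gamma: assumes p: "2 \<le> p" shows "group (Gamma p)"
proof (rule groupI)
  fix x y assume "x \<in> carrier (Gamma p)" "y \<in> carrier (Gamma p)"
  then obtain t j s k where x: "x = (t, j)" "t \<in> torus p" "j < p" and y: "y = (s, k)" "s \<in> torus p" "k < p"
    by (auto simp: Gamma_carrier)
  show "x \<otimes>\<^bsub>Gamma p\<^esub> y \<in> carrier (Gamma p)"
    using x y p by (simp add: Gamma_mult Gamma_carrier torus_mult rho_pow_torus)
next
  show "\<one>\<^bsub>Gamma p\<^esub> \<in> carrier (Gamma p)" using p by (simp add: Gamma_one Gamma_carrier torus_one)
next
  fix x y z assume "x \<in> carrier (Gamma p)" "y \<in> carrier (Gamma p)" "z \<in> carrier (Gamma p)"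
  then obtain t j s k u l where x: "x = (t, j)" "t \<in> torus p" "j < p" and y: "y = (s, k)" "s \<in> torus p" "k < p"
    and z: "z = (u, l)" "u \<in> torus p" "l < p"
    by (auto simp: Gamma_carrier)
  have ru: "(rho p ^^ k) u \<in> torus p" using z p by (simp add: rho_pow_torus)
  have e1: "(rho p ^^ j) (\<lambda>i. s i * (rho p ^^ k) u i) = (\<lambda>i. (rho p ^^ j) s i * (rho p ^^ (j+k)) u i)"
    using rho_pow_mult[OF y(2) ru p] by (simp add: funpow_add)
  have e2: "(rho p ^^ ((j + k) mod p)) u = (rho p ^^ (j+k)) u"
    using rho_pow_mod[OF z(2) p, of "j+k"] by simp
  show "x \<otimes>\<^bsub>Gamma p\<^esub> y \<otimes>\<^bsub>Gamma p\<^esub> z = x \<otimes>\<^bsub>Gamma p\<^esub> (y \<otimes>\<^bsub>Gamma p\<^esub> z)"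
    unfolding x y z Gamma_mult e1 e2
    by (simp add: mod_add_left_eq mod_add_right_eq add.assoc mult.assoc)
next
  fix x assume "x \<in> carrier (Gamma p)"
  then obtain t j where x: "x = (t, j)" "t \<in> torus p" "j < p" by (auto simp: Gamma_carrier)
  show "\<one>\<^bsub>Gamma p\<^esub> \<otimes>\<^bsub>Gamma p\<^esub> x = x"
    using x by (simp add: Gamma_one Gamma_mult)
next
  fix x assume "x \<in> carrier (Gamma p)"
  then obtain t j where x: "x = (t, j)" "t \<in> torus p" "j < p" by (auto simp: Gamma_carrier)
  define k where "k = (p - j) mod p"
  define v where "v = (rho p ^^ k) t"
  have v: "v \<in> torus p" using x p by (simp add: v_def rho_pow_torus)
  have "(\<lambda>i. inverse (v i), k) \<in> carrier (Gamma p)"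
    using v p by (simp add: Gamma_carrier torus_inv k_def)
  moreover have "(\<lambda>i. inverse (v i), k) \<otimes>\<^bsub>Gamma p\<^esub> x = \<one>\<^bsub>Gamma p\<^esub>"
  proof -
    have "(k + j) mod p = 0" using x p unfolding k_def
      by (metis add.commute add_diff_inverse_nat mod_add_left_eq mod_self not_less_iff_gr_or_eq)
    then show ?thesis using x v torus_nz[OF v] by (simp add: Gamma_mult Gamma_one v_def[symmetric])
  qed
  ultimately show "\<exists>y\<in>carrier (Gamma p). y \<otimes>\<^bsub>Gamma p\<^esub> x = \<one>\<^bsub>Gamma p\<^esub>" by blast
qed

lemma pow_t1: assumes "t \<in> torus p" "2 \<le> p"
  shows "(t, 1) [^]\<^bsub>Gamma p\<^esub> n = (\<lambda>i. \<Prod>m<n. (rho p ^^ m) t i, n mod p)"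
proof (induction n)
  case 0 then show ?case by (simp add: Gamma_one)
next
  case (Suc n)
  have "(rho p ^^ (n mod p)) t = (rho p ^^ n) t" using rho_pow_mod[OF assms, of n] by simp
  then show ?case using Suc by (simp add: Gamma_mult mod_Suc_eq)
qed

lemma nat_mod_inv_aux: assumes "m < p"
  shows "nat ((c - int (nat ((c - int m) mod int p))) mod int p) = m"
proof -
  have p: "int p > 0" using assms by simp
  have "int (nat ((c - int m) mod int p)) = (c - int m) mod int p" using p by simp
  then have "(c - int (nat ((c - int m) mod int p))) mod int p = (c - (c - int m)) mod int p"
    by (simp add: mod_diff_right_eq)
  also have "\<dots> = int m" using assms by simp
  finally show ?thesis by simp
qed

lemma prodE: assumes "2 \<le> p" shows "(\<Prod>m<p. E p t (c - int m)) = (\<Prod>k<p. t k)"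
proof (rule prod.reindex_bij_witness[where i = "\<lambda>m. nat ((c - int m) mod int p)" and j = "\<lambda>m. nat ((c - int m) mod int p)"])
  fix a assume "a \<in> {..<p}"
  then show "nat ((c - int (nat ((c - int a) mod int p))) mod int p) = a" by (simp only: lessThan_iff nat_mod_inv_aux)
  then show "nat ((c - int (nat ((c - int a) mod int p))) mod int p) = a" .
next
  fix a assume "a \<in> {..<p}"
  then show "nat ((c - int a) mod int p) \<in> {..<p}" using assms by (simp add: nat_less_iff)
  then show "nat ((c - int a) mod int p) \<in> {..<p}" .
  show "t (nat ((c - int a) mod int p)) = E p t (c - int a)" by (simp add: E_def)
qed

lemma norm_prod_one: assumes "t \<in> torus p" "2 \<le> p"
  shows "(\<Prod>m<p. (rho p ^^ m) t i) = 1"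
proof (cases "i \<in> {1..p-1}")
  case True
  have P: "(\<Prod>k<p. t k) \<noteq> 0" using torus_nz[OF assms(1)] by simp
  have "(\<Prod>m<p. (rho p ^^ m) t i) = (\<Prod>m<p. E p t (int i - int m) * inverse (E p t (0 - int m)))"
    using True by (simp add: rho_pow_CF[OF assms] CF_def)
  also have "\<dots> = (\<Prod>m<p. E p t (int i - int m)) * inverse (\<Prod>m<p. E p t (0 - int m))"
    using prod_inversef[of "\<lambda>m. E p t (0 - int m)" "{..<p}"] by (simp add: prod.distrib o_def)
  also have "\<dots> = 1" unfolding prodE[OF assms(2)] using P by simp
  finally show ?thesis .
next
  case False
  then show ?thesis by (auto simp: rho_pow_CF[OF assms] CF_def)
qed

lemma ta_eq: "2 \<le> p \<Longrightarrow> (t, 0) \<otimes>\<^bsub>Gamma p\<^esub> gen_a = (t, 1)"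
  by (simp add: Gamma_mult gen_a_def)

lemma ord_ta: assumes "Factorial_Ring.prime p" "t \<in> torus p"
  shows "group.ord (Gamma p) ((t, 0) \<otimes>\<^bsub>Gamma p\<^esub> gen_a) = p"
proof -
  have p: "2 \<le> p" using assms(1) prime_ge_2_nat by blast
  interpret G: group "Gamma p" by (rule group_Gamma[OF p])
  have x: "(t, 1) \<in> carrier (Gamma p)" using assms p by (simp add: Gamma_carrier)
  have "(t, 1) [^]\<^bsub>Gamma p\<^esub> p = \<one>\<^bsub>Gamma p\<^esub>"
    using pow_t1[OF assms(2) p, of p] norm_prod_one[OF assms(2) p] by (simp add: Gamma_one fun_eq_iff)
  then have d: "G.ord (t, 1) dvd p" using G.pow_eq_id[OF x] by blast
  have n1: "G.ord (t, 1) \<noteq> 1" using G.ord_eq_1[OF x] by (simp add: Gamma_one)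
  have "G.ord (t, 1) = p" using d assms(1) n1 unfolding prime_nat_iff by blast
  then show ?thesis using ta_eq[OF p] by simp
qed

lemma (in group) conj_hom: assumes "g \<in> carrier G" shows "group_hom G G (\<lambda>x. g \<otimes> x \<otimes> inv g)"
proof -
  have "(\<lambda>x. g \<otimes> x \<otimes> inv g) \<in> hom G G"
  proof (rule homI)
    fix x y assume xy: "x \<in> carrier G" "y \<in> carrier G"
    have "inv g \<otimes> (g \<otimes> (y \<otimes> inv g)) = y \<otimes> inv g"
      using assms xy by (simp add: m_assoc[symmetric])
    then show "g \<otimes> (x \<otimes> y) \<otimes> inv g = g \<otimes> x \<otimes> inv g \<otimes> (g \<otimes> y \<otimes> inv g)"
      using assms xy by (simp add: m_assoc)
  qed (use assms in simp)
  then show ?thesis by (intro group_hom.intro group_hom_axioms.intro) (simp_all add: is_group)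
qed

lemma gen_a_carrier: "2 \<le> p \<Longrightarrow> gen_a \<in> carrier (Gamma p)"
  by (simp add: gen_a_def Gamma_carrier torus_one)

lemma conj_exists: assumes t: "t \<in> torus p" and p: "2 \<le> p"
  shows "\<exists>g\<in>carrier (Gamma p). (\<lambda>x. g \<otimes>\<^bsub>Gamma p\<^esub> x \<otimes>\<^bsub>Gamma p\<^esub> inv\<^bsub>Gamma p\<^esub> g) ` Cp p
             = generate (Gamma p) {(t, 0) \<otimes>\<^bsub>Gamma p\<^esub> gen_a}"
proof -
  interpret G: group "Gamma p" by (rule group_Gamma[OF p])
  define P where "P = (\<Prod>k\<in>{1..p-1}. t k)"
  have Pn: "cmod P = 1" unfolding P_def prod_norm[symmetric] by (simp add: torus_norm[OF t])
  then have P0: "P \<noteq> 0" by auto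
  define c where "c = cis (Arg P / real p)"
  have cp: "c ^ p = P"
  proof -
    have "c ^ p = cis (Arg P)" unfolding c_def Complex.DeMoivre using p by simp
    also have "\<dots> = P" using P0 Pn by (simp add: cis_Arg sgn_div_norm)
    finally show ?thesis .
  qed
  have cn: "cmod c = 1" by (simp add: c_def)
  then have c0: "c \<noteq> 0" by auto
  have cpe: "c ^ (p-1) * c = P" using cp p by (metis Suc_diff_1 less_le_trans pos2 power_Suc2)
  define s where "s = (\<lambda>i. if i \<in> {1..p-1} then (\<Prod>k\<in>{1..i}. t k) / c ^ i else 1)"
  have st: "s \<in> torus p"
    by (rule torusI) (auto simp: s_def norm_divide norm_power cn prod_norm[symmetric] torus_norm[OF t])
  have snz: "\<And>i. s i \<noteq> 0" using torus_nz[OF st] .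
  define s' where "s' = (\<lambda>i. inverse (s i))"
  have s't: "s' \<in> torus p" unfolding s'_def by (rule torus_inv[OF st])
  have sp: "s (p-1) = P / c^(p-1)" using p by (simp add: s_def P_def)
  have key: "(\<lambda>i. s i * rho p s' i) = t"
  proof
    fix i
    consider "i = 1" | "2 \<le> i \<and> i \<le> p-1" | "i \<notin> {1..p-1}" by force
    then show "s i * rho p s' i = t i"
    proof cases
      case 1
      have s1: "s 1 = t 1 / c" using p c0 by (auto simp: s_def)
      have "s i * rho p s' i = s 1 * s (p-1)" using 1 by (simp add: rho_def s'_def)
      also have "\<dots> = t 1 * P / (c^(p-1) * c)" unfolding s1 sp using c0 by (simp add: field_simps)
      also have "\<dots> = t i" using 1 cpe P0 by simp
      finally show ?thesis .
    next
      case 2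
      define Q where "Q = (\<Prod>k\<in>{1..i-1}. t k)"
      have Q0: "Q \<noteq> 0" unfolding Q_def using torus_nz[OF t] by simp
      have eqi: "{1..i} = insert i {1..i-1}" using 2 by auto
      have ni: "i \<notin> {1..i-1}" using 2 by auto
      have pi: "(\<Prod>k\<in>{1..i}. t k) = t i * Q" unfolding Q_def eqi
        by (rule prod.insert[OF finite_atLeastAtMost ni])
      have ci: "c ^ i = c^(i-1) * c" using 2 by (metis Suc_diff_1 less_le_trans pos2 power_Suc2)
      have si: "s i = t i * Q / (c^(i-1) * c)" using 2 pi by (simp add: s_def ci)
      have si1: "s (i-1) = Q / c^(i-1)" using 2 by (auto simp: s_def Q_def)
      have "s i * rho p s' i = s i * (inverse (s (i-1)) * s (p-1))" using 2 by (simp add: rho_def s'_def)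
      also have "\<dots> = t i * P / (c^(p-1) * c)" unfolding si si1 sp using c0 Q0 by (simp add: field_simps)
      also have "\<dots> = t i" using cpe P0 by simp
      finally show ?thesis .
    next
      case 3
      then show ?thesis using t p by (auto simp: rho_def s_def torus_out)
    qed
  qed
  have sc: "(s, 0) \<in> carrier (Gamma p)" using st p by (simp add: Gamma_carrier)
  have invg: "inv\<^bsub>Gamma p\<^esub> (s, 0) = (s', 0)"
    by (rule G.inv_equality) (use st s't p snz in \<open>simp_all add: Gamma_mult Gamma_one Gamma_carrier s'_def fun_eq_iff\<close>)
  have "(s, 1) \<otimes>\<^bsub>Gamma p\<^esub> (s', 0) = (\<lambda>i. s i * rho p s' i, 1)" using p by (simp add: Gamma_mult)
  then have hg: "(s, 0) \<otimes>\<^bsub>Gamma p\<^esub> gen_a \<otimes>\<^bsub>Gamma p\<^esub> inv\<^bsub>Gamma p\<^esub> (s, 0) = (t, 0) \<otimes>\<^bsub>Gamma p\<^esub> gen_a"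
    unfolding invg ta_eq[OF p] key .
  interpret H: group_hom "Gamma p" "Gamma p" "\<lambda>x. (s, 0) \<otimes>\<^bsub>Gamma p\<^esub> x \<otimes>\<^bsub>Gamma p\<^esub> inv\<^bsub>Gamma p\<^esub> (s, 0)"
    by (rule G.conj_hom[OF sc])
  have "(\<lambda>x. (s, 0) \<otimes>\<^bsub>Gamma p\<^esub> x \<otimes>\<^bsub>Gamma p\<^esub> inv\<^bsub>Gamma p\<^esub> (s, 0)) ` Cp p
      = generate (Gamma p) ((\<lambda>x. (s, 0) \<otimes>\<^bsub>Gamma p\<^esub> x \<otimes>\<^bsub>Gamma p\<^esub> inv\<^bsub>Gamma p\<^esub> (s, 0)) ` {gen_a})"
    unfolding Cp_def by (rule H.generate_img[symmetric]) (simp add: gen_a_carrier[OF p])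
  also have "\<dots> = generate (Gamma p) {(t, 0) \<otimes>\<^bsub>Gamma p\<^esub> gen_a}" using hg by simp
  finally show ?thesis using sc by blast
qed

lemma (in group) center_subgroup: "subgroup (center G) G"
proof (rule subgroupI)
  show "center G \<subseteq> carrier G" by (auto simp: center_def)
  show "center G \<noteq> {}" using one_closed by (auto simp: center_def)
next
  fix a assume a: "a \<in> center G"
  then have ac: "a \<in> carrier G" and com: "\<And>g. g \<in> carrier G \<Longrightarrow> a \<otimes> g = g \<otimes> a"
    by (auto simp: center_def)
  have "\<And>g. g \<in> carrier G \<Longrightarrow> inv a \<otimes> g = g \<otimes> inv a"
  proof -
    fix g assume g: "g \<in> carrier G"
    have 1: "inv (inv g \<otimes> a) = inv a \<otimes> g" using ac g by (simp add: inv_mult_group)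
    have 2: "inv (a \<otimes> inv g) = g \<otimes> inv a" using ac g by (simp add: inv_mult_group)
    have 3: "a \<otimes> inv g = inv g \<otimes> a" using com[of "inv g"] g by simp
    show "inv a \<otimes> g = g \<otimes> inv a" using 1 2 3 by simp
  qed
  then show "inv a \<in> center G" using ac by (simp add: center_def)
next
  fix a b assume "a \<in> center G" "b \<in> center G"
  then have ac: "a \<in> carrier G" and ca: "\<And>g. g \<in> carrier G \<Longrightarrow> a \<otimes> g = g \<otimes> a"
    and bc: "b \<in> carrier G" and cb: "\<And>g. g \<in> carrier G \<Longrightarrow> b \<otimes> g = g \<otimes> b"
    by (auto simp: center_def)
  have "\<And>g. g \<in> carrier G \<Longrightarrow> a \<otimes> b \<otimes> g = g \<otimes> (a \<otimes> b)"
  proof -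
    fix g assume g: "g \<in> carrier G"
    have "a \<otimes> b \<otimes> g = a \<otimes> (b \<otimes> g)" by (rule m_assoc[OF ac bc g])
    also have "\<dots> = a \<otimes> (g \<otimes> b)" using cb[OF g] by simp
    also have "\<dots> = a \<otimes> g \<otimes> b" by (rule m_assoc[OF ac g bc, symmetric])
    also have "\<dots> = g \<otimes> a \<otimes> b" using ca[OF g] by simp
    also have "\<dots> = g \<otimes> (a \<otimes> b)" by (rule m_assoc[OF g ac bc])
    finally show "a \<otimes> b \<otimes> g = g \<otimes> (a \<otimes> b)" .
  qed
  then show "a \<otimes> b \<in> center G" using ac bc by (simp add: center_def)
qed

lemma fixed_central: assumes p: "2 \<le> p" and t: "t \<in> torus p" and f: "rho p t = t"
  shows "(t, 0) \<in> center (Gamma p)"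
proof -
  have "\<And>g. g \<in> carrier (Gamma p) \<Longrightarrow> (t, 0) \<otimes>\<^bsub>Gamma p\<^esub> g = g \<otimes>\<^bsub>Gamma p\<^esub> (t, 0)"
  proof -
    fix g assume "g \<in> carrier (Gamma p)"
    then obtain s k where g: "g = (s, k)" "k < p" by (auto simp: Gamma_carrier)
    have 1: "(t, 0) \<otimes>\<^bsub>Gamma p\<^esub> (s, k) = (\<lambda>i. t i * s i, k)" using g by (simp add: Gamma_mult)
    have 2: "(s, k) \<otimes>\<^bsub>Gamma p\<^esub> (t, 0) = (\<lambda>i. s i * t i, k)"
      using g rho_pow_fix[OF f, of k] by (simp add: Gamma_mult)
    have 3: "(\<lambda>i. t i * s i) = (\<lambda>i. s i * t i)" by (rule ext) (rule mult.commute)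
    show "(t, 0) \<otimes>\<^bsub>Gamma p\<^esub> g = g \<otimes>\<^bsub>Gamma p\<^esub> (t, 0)" unfolding g(1) 1 2 3 ..
  qed
  then show ?thesis using t p by (simp add: center_def Gamma_carrier)
qed

lemma central_fixed: assumes p: "2 \<le> p" and c: "(t, j) \<in> center (Gamma p)"
  shows "j = 0 \<and> rho p t = t \<and> t \<in> torus p"
proof -
  have t: "t \<in> torus p" and jp: "j < p" using c by (auto simp: center_def Gamma_carrier)
  have com: "\<And>g. g \<in> carrier (Gamma p) \<Longrightarrow> (t, j) \<otimes>\<^bsub>Gamma p\<^esub> g = g \<otimes>\<^bsub>Gamma p\<^esub> (t, j)"
    using c by (auto simp: center_def)
  define \<sigma> where "\<sigma> = (\<lambda>i::nat. if i = 1 then \<i> else (1::complex))"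
  have st: "\<sigma> \<in> torus p" using p by (intro torusI) (auto simp: \<sigma>_def)
  have sc: "(\<sigma>, 0) \<in> carrier (Gamma p)" using st p by (simp add: Gamma_carrier)
  have "(t, j) \<otimes>\<^bsub>Gamma p\<^esub> (\<sigma>, 0) = (\<sigma>, 0) \<otimes>\<^bsub>Gamma p\<^esub> (t, j)"
    by (rule com[OF sc])
  then have h: "\<And>i. t i * (rho p ^^ j) \<sigma> i = \<sigma> i * t i" by (simp add: Gamma_mult fun_eq_iff)
  have fix\<sigma>: "\<And>i. CF p j \<sigma> i = \<sigma> i"
  proof -
    fix i
    have "t i * (rho p ^^ j) \<sigma> i = t i * \<sigma> i" using h[of i] by (simp only: mult.commute)
    then have "(rho p ^^ j) \<sigma> i = \<sigma> i" using torus_nz[OF t, of i] by simp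
    then show "CF p j \<sigma> i = \<sigma> i" by (simp only: rho_pow_CF[OF st p])
  qed
  have j0: "j = 0"
  proof (rule ccontr)
    assume "j \<noteq> 0"
    have e: "- int j = int (p - j) + (-1) * int p" using jp by simp
    have m: "(- int j) mod int p = int (p - j)"
    proof -
      have "(- int j) mod int p = int (p - j) mod int p" unfolding e by (rule mod_mult_self1)
      also have "\<dots> = int ((p - j) mod p)" by (rule zmod_int[symmetric])
      also have "(p - j) mod p = p - j" using \<open>j \<noteq> 0\<close> jp by simp
      finally show ?thesis .
    qed
    have Ej: "E p \<sigma> (- int j) = \<sigma> (p - j)" unfolding E_def m by simp
    show False
    proof (cases "j + 1 \<le> p - 1")
      case True
      have e1: "E p \<sigma> (int (j+1) - int j) = \<i>" using p by (simp add: E_def \<sigma>_def)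
      have "CF p j \<sigma> (j+1) = \<i>" using True \<open>j \<noteq> 0\<close> unfolding CF_def e1 Ej by (simp add: \<sigma>_def)
      then show False using fix\<sigma>[of "j+1"] \<open>j \<noteq> 0\<close> by (simp add: \<sigma>_def)
    next
      case False
      then have jj: "j = p - 1" using jp by simp
      have e1: "E p \<sigma> (int j - int j) = 1" by (simp add: E_def \<sigma>_def)
      have "CF p j \<sigma> j = - \<i>" using jj p \<open>j \<noteq> 0\<close> unfolding CF_def e1 Ej by (simp add: \<sigma>_def)
      then show False using fix\<sigma>[of j] by (simp add: \<sigma>_def complex_eq_iff split: if_splits)
    qed
  qed
  have "(t, j) \<otimes>\<^bsub>Gamma p\<^esub> gen_a = gen_a \<otimes>\<^bsub>Gamma p\<^esub> (t, j)"
    by (rule com[OF gen_a_carrier[OF p]])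
  then have "rho p t = t" using j0 p by (simp add: Gamma_mult gen_a_def fun_eq_iff)
  then show ?thesis using j0 t by simp
qed

lemma xi_pow: "1 \<le> p \<Longrightarrow> xi p ^ p = 1"
  using complex_root_unity[of p 1] by (simp add: xi_def)

lemma xi_norm: "cmod (xi p) = 1"
  by (simp add: xi_def)

lemma zeta_fix: assumes p: "2 \<le> p"
  shows "fst (zeta p) \<in> torus p" "rho p (fst (zeta p)) = fst (zeta p)"
proof -
  show "fst (zeta p) \<in> torus p" by (rule torusI) (auto simp: zeta_def norm_power xi_norm)
  have inv: "inverse (xi p ^ (p-1)) = xi p"
  proof (rule inverse_unique)
    have "xi p ^ (p-1) * xi p = xi p ^ p" using p by (metis Suc_diff_1 less_le_trans pos2 power_Suc2)
    then show "xi p ^ (p-1) * xi p = 1" using xi_pow p by simp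
  qed
  show "rho p (fst (zeta p)) = fst (zeta p)"
  proof
    fix i
    consider "i = 1" | "2 \<le> i \<and> i \<le> p-1" | "i \<notin> {1..p-1}" by force
    then show "rho p (fst (zeta p)) i = fst (zeta p) i"
    proof cases
      case 1 then show ?thesis using p inv by (simp add: rho_def zeta_def)
    next
      case 2
      then have "xi p ^ (i - 1) * xi p = xi p ^ i" by (metis Suc_diff_1 less_le_trans pos2 power_Suc2)
      moreover have "fst (zeta p) (i-1) = xi p ^ (i-1)" "fst (zeta p) (p-1) = xi p ^ (p-1)"
        "fst (zeta p) i = xi p ^ i" using 2 by (auto simp: zeta_def)
      moreover have "rho p (fst (zeta p)) i = fst (zeta p) (i-1) * inverse (fst (zeta p) (p-1))"
        using 2 by (simp add: rho_def)
      ultimately show ?thesis using inv by simp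
    next
      case 3 then show ?thesis by (auto simp: rho_def zeta_def)
    qed
  qed
qed

lemma pow0: "(u, 0) [^]\<^bsub>Gamma p\<^esub> (n::nat) = (\<lambda>i. u i ^ n, 0)"
proof (induction n)
  case 0 then show ?case by (simp add: Gamma_one)
next
  case (Suc n)
  have "(u, 0) [^]\<^bsub>Gamma p\<^esub> Suc n = (\<lambda>i. u i ^ n, 0) \<otimes>\<^bsub>Gamma p\<^esub> (u, 0)"
    using Suc by (simp only: nat_pow_Suc)
  also have "\<dots> = (\<lambda>i. u i ^ n * u i, 0)" by (simp add: Gamma_mult)
  also have "\<dots> = (\<lambda>i. u i ^ Suc n, 0)" by (simp only: power_Suc2)
  finally show ?case .
qed

lemma center_in_gen: assumes p: "2 \<le> p" and x: "x \<in> center (Gamma p)"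
  shows "\<exists>m::nat. x = zeta p [^]\<^bsub>Gamma p\<^esub> m"
proof -
  obtain t j where xt: "x = (t, j)" by (cases x)
  have j0: "j = 0" and f: "rho p t = t" and t: "t \<in> torus p" using central_fixed[OF p] x xt by auto
  define c where "c = inverse (t (p-1))"
  have ti: "1 \<le> i \<Longrightarrow> i \<le> p-1 \<Longrightarrow> t i = c ^ i" for i
  proof (induction i)
    case 0 then show ?case by simp
  next
    case (Suc i)
    show ?case
    proof (cases "i = 0")
      case True
      have "t 1 = rho p t 1" using f by simp
      also have "\<dots> = c" by (simp add: rho_def c_def)
      finally show ?thesis using True by simp
    next
      case False
      then have IH: "t i = c ^ i" using Suc by simp
      have "t (Suc i) = rho p t (Suc i)" using f by simp
      also have "\<dots> = t i * inverse (t (p-1))" using False Suc.prems by (simp add: rho_def)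
      also have "\<dots> = c ^ Suc i" unfolding IH c_def[symmetric] by (simp add: mult.commute)
      finally show ?thesis .
    qed
  qed
  have tp: "t (p-1) = c ^ (p-1)" using p by (intro ti) auto
  have "c * t (p-1) = 1" unfolding c_def using torus_nz[OF t] by simp
  moreover have "c ^ p = c * c ^ (p-1)" using p by (metis Suc_diff_1 less_le_trans pos2 power_Suc)
  ultimately have cp: "c ^ p = 1" using tp by simp
  have "c \<in> {z::complex. z ^ p = 1}" using cp by simp
  then obtain m where m: "c = exp (2 * of_real pi * \<i> * of_nat m / of_nat p)"
    using complex_roots_unity[of p] p by auto
  have cx: "c = xi p ^ m"
  proof -
    have "xi p ^ m = exp (of_nat m * (complex_of_real (2*pi) * \<i> / of_nat p))"
      unfolding xi_def by (rule exp_of_nat_mult[symmetric])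
    also have "\<dots> = c" unfolding m by (simp add: field_simps)
    finally show ?thesis by simp
  qed
  have "t = (\<lambda>i. (if i \<in> {1..p-1} then xi p ^ i else 1) ^ m)"
  proof
    fix i show "t i = (if i \<in> {1..p-1} then xi p ^ i else 1) ^ m"
    proof (cases "i \<in> {1..p-1}")
      case True
      then have "t i = (xi p ^ m) ^ i" using ti cx by auto
      also have "\<dots> = (xi p ^ i) ^ m" by (simp add: power_mult[symmetric] mult.commute)
      finally show ?thesis using True by simp
    next
      case False then show ?thesis using t by (auto simp: torus_out)
    qed
  qed
  then have "x = zeta p [^]\<^bsub>Gamma p\<^esub> m" unfolding xt j0 zeta_def pow0 by simp
  then show ?thesis by blast
qed

lemma zeta_carrier: "2 \<le> p \<Longrightarrow> zeta p \<in> carrier (Gamma p)"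
  using zeta_fix(1)[of p] by (simp add: Gamma_carrier zeta_def)

lemma zeta_center: assumes p: "2 \<le> p" shows "zeta p \<in> center (Gamma p)"
proof -
  have "(fst (zeta p), 0) \<in> center (Gamma p)" by (rule fixed_central[OF p zeta_fix[OF p]])
  then show ?thesis by (simp add: zeta_def)
qed

lemma center_eq: assumes p: "2 \<le> p" shows "center (Gamma p) = generate (Gamma p) {zeta p}"
proof
  interpret G: group "Gamma p" by (rule group_Gamma[OF p])
  show "generate (Gamma p) {zeta p} \<subseteq> center (Gamma p)"
    by (rule G.generate_subgroup_incl) (simp_all add: zeta_center[OF p] G.center_subgroup)
  show "center (Gamma p) \<subseteq> generate (Gamma p) {zeta p}"
  proof
    fix x assume "x \<in> center (Gamma p)"
    then obtain m :: nat where xm: "x = zeta p [^]\<^bsub>Gamma p\<^esub> m" using center_in_gen[OF p] by blast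
    have sg: "subgroup (generate (Gamma p) {zeta p}) (Gamma p)"
      by (rule G.generate_is_subgroup) (simp add: zeta_carrier[OF p])
    have "zeta p \<in> generate (Gamma p) {zeta p}" by (rule generate.incl) simp
    then have "zeta p [^]\<^bsub>Gamma p\<^esub> (int m) \<in> generate (Gamma p) {zeta p}"
      by (rule G.subgroup_int_pow_closed[OF sg])
    then show "x \<in> generate (Gamma p) {zeta p}" unfolding xm int_pow_int .
  qed
qed

lemma center_torus: assumes p: "2 \<le> p" shows "center (Gamma p) \<subseteq> torus p \<times> {0}"
proof
  fix x assume x: "x \<in> center (Gamma p)"
  obtain t j where xt: "x = (t, j)" by (cases x)
  then show "x \<in> torus p \<times> {0}" using central_fixed[OF p] x by auto
qed

lemma Cp_eq: assumes p: "2 \<le> p" shows "Cp p = {(\<lambda>_. 1, k) | k. k < p}"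
proof -
  interpret G: group "Gamma p" by (rule group_Gamma[OF p])
  define S where "S = {((\<lambda>_. 1) :: nat \<Rightarrow> complex, k) | k. k < p}"
  have mS: "(\<lambda>_. 1, j) \<otimes>\<^bsub>Gamma p\<^esub> (\<lambda>_. 1, k) = ((\<lambda>_. 1) :: nat \<Rightarrow> complex, (j + k) mod p)" for j k
    by (simp add: Gamma_mult rho_pow_one)
  have sg: "subgroup S (Gamma p)"
  proof (rule G.subgroupI)
    show "S \<subseteq> carrier (Gamma p)" by (auto simp: S_def Gamma_carrier torus_one)
    have "((\<lambda>_. 1) :: nat \<Rightarrow> complex, 0) \<in> S" using p unfolding S_def by auto
    then show "S \<noteq> {}" by blast
  next
    fix a assume "a \<in> S"
    then obtain k where a: "a = (\<lambda>_. 1, k)" "k < p" by (auto simp: S_def)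
    have "((p - k) mod p + k) mod p = 0" using a(2)
      by (metis add.commute add_diff_inverse_nat mod_add_left_eq mod_self not_less_iff_gr_or_eq)
    then have "inv\<^bsub>Gamma p\<^esub> a = (\<lambda>_. 1, (p - k) mod p)"
      unfolding a by (intro G.inv_equality) (use a p in \<open>simp_all add: mS Gamma_one Gamma_carrier torus_one\<close>)
    then show "inv\<^bsub>Gamma p\<^esub> a \<in> S" using p by (auto simp: S_def)
  next
    fix a b assume "a \<in> S" "b \<in> S"
    then show "a \<otimes>\<^bsub>Gamma p\<^esub> b \<in> S" using p by (auto simp: S_def mS)
  qed
  have "generate (Gamma p) {gen_a} \<subseteq> S"
    by (rule G.generate_subgroup_incl[OF _ sg]) (use p in \<open>auto simp: S_def gen_a_def\<close>)
  moreover have "S \<subseteq> generate (Gamma p) {gen_a}"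
  proof
    fix x assume "x \<in> S"
    then obtain k where x: "x = (\<lambda>_. 1, k)" "k < p" by (auto simp: S_def)
    have sg2: "subgroup (generate (Gamma p) {gen_a}) (Gamma p)"
      by (rule G.generate_is_subgroup) (simp add: gen_a_carrier[OF p])
    have "gen_a \<in> generate (Gamma p) {gen_a}" by (rule generate.incl) simp
    then have "gen_a [^]\<^bsub>Gamma p\<^esub> (int k) \<in> generate (Gamma p) {gen_a}"
      by (rule G.subgroup_int_pow_closed[OF sg2])
    moreover have "gen_a [^]\<^bsub>Gamma p\<^esub> k = x"
      unfolding gen_a_def pow_t1[OF torus_one p] using x by (simp add: rho_pow_one)
    ultimately show "x \<in> generate (Gamma p) {gen_a}" by (simp add: int_pow_int)
  qed
  ultimately show ?thesis unfolding Cp_def S_def by blast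
qed

lemma conj_coset: "(g <#\<^bsub>G\<^esub> H) #>\<^bsub>G\<^esub> x = (\<lambda>h. g \<otimes>\<^bsub>G\<^esub> h \<otimes>\<^bsub>G\<^esub> x) ` H"
  by (auto simp: l_coset_def r_coset_def)

lemma (in group) conj_comm_elim:
  assumes h: "h \<in> carrier G" and c: "c \<in> carrier G" and a: "a \<in> carrier G" and comm: "c \<otimes> a = a \<otimes> c"
  shows "h \<otimes> c \<otimes> a \<otimes> inv (h \<otimes> c) = h \<otimes> a \<otimes> inv h"
proof -
  have cc: "c \<otimes> (inv c \<otimes> inv h) = inv h" using h c by (simp add: m_assoc[symmetric])
  have "h \<otimes> c \<otimes> a \<otimes> inv (h \<otimes> c) = h \<otimes> (c \<otimes> a) \<otimes> (inv c \<otimes> inv h)"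
    using h c a by (simp add: m_assoc inv_mult_group)
  also have "\<dots> = h \<otimes> (a \<otimes> c) \<otimes> (inv c \<otimes> inv h)" using comm by simp
  also have "\<dots> = h \<otimes> a \<otimes> (c \<otimes> (inv c \<otimes> inv h))" using h c a by (simp add: m_assoc)
  also have "\<dots> = h \<otimes> a \<otimes> inv h" by (simp only: cc)
  finally show ?thesis .
qed

lemma Cp_comm: assumes p: "2 \<le> p" and x: "x \<in> Cp p" and y: "y \<in> Cp p"
  shows "x \<otimes>\<^bsub>Gamma p\<^esub> y = y \<otimes>\<^bsub>Gamma p\<^esub> x"
  using x y by (auto simp: Cp_eq[OF p] Gamma_mult rho_pow_one add.commute)

lemma Cp_carrier: "2 \<le> p \<Longrightarrow> Cp p \<subseteq> carrier (Gamma p)"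
  by (auto simp: Cp_eq Gamma_carrier torus_one)

lemma normalizer_eq: assumes p: "2 \<le> p"
  shows "normalizer (Gamma p) (Cp p) = center (Gamma p) <#>\<^bsub>Gamma p\<^esub> Cp p"
proof -
  interpret G: group "Gamma p" by (rule group_Gamma[OF p])
  have N: "normalizer (Gamma p) (Cp p) =
      {g \<in> carrier (Gamma p). (\<lambda>h. g \<otimes>\<^bsub>Gamma p\<^esub> h \<otimes>\<^bsub>Gamma p\<^esub> inv\<^bsub>Gamma p\<^esub> g) ` Cp p = Cp p}"
    unfolding normalizer_def stabilizer_def using Cp_carrier[OF p] by (simp add: conj_coset)
  have Zs: "subgroup (center (Gamma p)) (Gamma p)" by (rule G.center_subgroup)
  have aC: "gen_a \<in> Cp p" using p by (simp add: Cp_eq gen_a_def)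
  show ?thesis unfolding N
  proof
    show "{g \<in> carrier (Gamma p). (\<lambda>h. g \<otimes>\<^bsub>Gamma p\<^esub> h \<otimes>\<^bsub>Gamma p\<^esub> inv\<^bsub>Gamma p\<^esub> g) ` Cp p = Cp p}
        \<subseteq> center (Gamma p) <#>\<^bsub>Gamma p\<^esub> Cp p"
    proof
      fix g assume "g \<in> {g \<in> carrier (Gamma p). (\<lambda>h. g \<otimes>\<^bsub>Gamma p\<^esub> h \<otimes>\<^bsub>Gamma p\<^esub> inv\<^bsub>Gamma p\<^esub> g) ` Cp p = Cp p}"
      then have gc: "g \<in> carrier (Gamma p)" and img: "(\<lambda>h. g \<otimes>\<^bsub>Gamma p\<^esub> h \<otimes>\<^bsub>Gamma p\<^esub> inv\<^bsub>Gamma p\<^esub> g) ` Cp p = Cp p"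
        by auto
      obtain s j where g: "g = (s, j)" "s \<in> torus p" "j < p" using gc by (auto simp: Gamma_carrier)
      define c where "c = ((\<lambda>_. 1) :: nat \<Rightarrow> complex, j)"
      have cC: "c \<in> Cp p" using g p by (simp add: Cp_eq c_def)
      have hc: "(s, 0) \<otimes>\<^bsub>Gamma p\<^esub> c = g" using g by (simp add: c_def Gamma_mult)
      have hcar: "(s, 0) \<in> carrier (Gamma p)" using g p by (simp add: Gamma_carrier)
      have ccar: "c \<in> carrier (Gamma p)" using cC Cp_carrier[OF p] by auto
      have acar: "gen_a \<in> carrier (Gamma p)" by (rule gen_a_carrier[OF p])
      have "g \<otimes>\<^bsub>Gamma p\<^esub> gen_a \<otimes>\<^bsub>Gamma p\<^esub> inv\<^bsub>Gamma p\<^esub> g \<in> Cp p"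
        using img aC by blast
      then have "(s, 0) \<otimes>\<^bsub>Gamma p\<^esub> gen_a \<otimes>\<^bsub>Gamma p\<^esub> inv\<^bsub>Gamma p\<^esub> (s, 0) \<in> Cp p"
        unfolding hc[symmetric] G.conj_comm_elim[OF hcar ccar acar Cp_comm[OF p cC aC]] .
      moreover
      define s' where "s' = (\<lambda>i. inverse (s i))"
      have s't: "s' \<in> torus p" unfolding s'_def by (rule torus_inv[OF g(2)])
      have snz: "\<And>i. s i \<noteq> 0" by (rule torus_nz[OF g(2)])
      have invg: "inv\<^bsub>Gamma p\<^esub> (s, 0) = (s', 0)"
        by (rule G.inv_equality) (use g s't p snz in \<open>simp_all add: Gamma_mult Gamma_one Gamma_carrier s'_def fun_eq_iff\<close>)
      have "(s, 1) \<otimes>\<^bsub>Gamma p\<^esub> (s', 0) = (\<lambda>i. s i * rho p s' i, 1)" using p by (simp add: Gamma_mult)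
      then have "(s, 0) \<otimes>\<^bsub>Gamma p\<^esub> gen_a \<otimes>\<^bsub>Gamma p\<^esub> inv\<^bsub>Gamma p\<^esub> (s, 0) = (\<lambda>i. s i * rho p s' i, 1)"
        unfolding invg ta_eq[OF p] .
      ultimately have "(\<lambda>i. s i * rho p s' i) = (\<lambda>_. 1)" by (simp add: Cp_eq[OF p])
      then have "\<And>i. s i * rho p s' i = 1" by (simp add: fun_eq_iff)
      then have "\<And>i. rho p s' i = s' i" unfolding s'_def by (metis inverse_unique)
      then have "rho p s' = s'" by (simp add: fun_eq_iff)
      then have "(s', 0) \<in> center (Gamma p)" by (rule fixed_central[OF p s't])
      then have "inv\<^bsub>Gamma p\<^esub> (s', 0) \<in> center (Gamma p)" by (rule subgroup.m_inv_closed[OF Zs])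
      moreover have "inv\<^bsub>Gamma p\<^esub> (s', 0) = (s, 0)"
        by (rule G.inv_equality) (use g s't p snz in \<open>simp_all add: Gamma_mult Gamma_one Gamma_carrier s'_def fun_eq_iff\<close>)
      ultimately have "(s, 0) \<in> center (Gamma p)" by simp
      then show "g \<in> center (Gamma p) <#>\<^bsub>Gamma p\<^esub> Cp p"
        unfolding set_mult_def using hc cC by blast
    qed
  next
    show "center (Gamma p) <#>\<^bsub>Gamma p\<^esub> Cp p \<subseteq>
      {g \<in> carrier (Gamma p). (\<lambda>h. g \<otimes>\<^bsub>Gamma p\<^esub> h \<otimes>\<^bsub>Gamma p\<^esub> inv\<^bsub>Gamma p\<^esub> g) ` Cp p = Cp p}"
    proof
      fix g assume "g \<in> center (Gamma p) <#>\<^bsub>Gamma p\<^esub> Cp p"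
      then obtain z c where z: "z \<in> center (Gamma p)" and c: "c \<in> Cp p" and g: "g = z \<otimes>\<^bsub>Gamma p\<^esub> c"
        unfolding set_mult_def by blast
      have zc: "z \<in> carrier (Gamma p)" using z by (simp add: center_def)
      have zcom: "\<And>x. x \<in> carrier (Gamma p) \<Longrightarrow> z \<otimes>\<^bsub>Gamma p\<^esub> x = x \<otimes>\<^bsub>Gamma p\<^esub> z"
        using z by (simp add: center_def)
      have cc: "c \<in> carrier (Gamma p)" using c Cp_carrier[OF p] by auto
      have gc: "g \<in> carrier (Gamma p)" using zc cc g by simp
      have gfix: "g \<otimes>\<^bsub>Gamma p\<^esub> x \<otimes>\<^bsub>Gamma p\<^esub> inv\<^bsub>Gamma p\<^esub> g = x" if x: "x \<in> Cp p" for x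
      proof -
        have xc: "x \<in> carrier (Gamma p)" using x Cp_carrier[OF p] by auto
        have "g \<otimes>\<^bsub>Gamma p\<^esub> x \<otimes>\<^bsub>Gamma p\<^esub> inv\<^bsub>Gamma p\<^esub> g = z \<otimes>\<^bsub>Gamma p\<^esub> x \<otimes>\<^bsub>Gamma p\<^esub> inv\<^bsub>Gamma p\<^esub> z"
          unfolding g by (rule G.conj_comm_elim[OF zc cc xc Cp_comm[OF p c x]])
        also have "\<dots> = x \<otimes>\<^bsub>Gamma p\<^esub> z \<otimes>\<^bsub>Gamma p\<^esub> inv\<^bsub>Gamma p\<^esub> z" using zcom[OF xc] by simp
        also have "\<dots> = x" using xc zc by (simp add: G.m_assoc)
        finally show ?thesis .
      qed
      have "(\<lambda>h. g \<otimes>\<^bsub>Gamma p\<^esub> h \<otimes>\<^bsub>Gamma p\<^esub> inv\<^bsub>Gamma p\<^esub> g) ` Cp p = (\<lambda>h. h) ` Cp p"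
        by (rule image_cong) (simp_all add: gfix)
      then show "g \<in> {g \<in> carrier (Gamma p). (\<lambda>h. g \<otimes>\<^bsub>Gamma p\<^esub> h \<otimes>\<^bsub>Gamma p\<^esub> inv\<^bsub>Gamma p\<^esub> g) ` Cp p = Cp p}"
        using gc by simp
    qed
  qed
qed

lemma center_Cp: assumes p: "2 \<le> p" shows "center (Gamma p) \<inter> Cp p = {\<one>\<^bsub>Gamma p\<^esub>}"
proof
  interpret G: group "Gamma p" by (rule group_Gamma[OF p])
  show "center (Gamma p) \<inter> Cp p \<subseteq> {\<one>\<^bsub>Gamma p\<^esub>}"
    using center_torus[OF p] by (auto simp: Cp_eq[OF p] Gamma_one)
  have "\<one>\<^bsub>Gamma p\<^esub> \<in> center (Gamma p)" by (rule subgroup.one_closed[OF G.center_subgroup])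
  moreover have "\<one>\<^bsub>Gamma p\<^esub> \<in> Cp p" using p by (simp add: Cp_eq[OF p] Gamma_one)
  ultimately show "{\<one>\<^bsub>Gamma p\<^esub>} \<subseteq> center (Gamma p) \<inter> Cp p" by simp
qed

theorem lemma3p4:
  fixes p :: nat
  assumes "Factorial_Ring.prime p"
  shows "group (Gamma p)
    \<and> (\<forall>t \<in> torus p.
          group.ord (Gamma p) ((t, 0) \<otimes>\<^bsub>Gamma p\<^esub> gen_a) = p
        \<and> (\<exists>g \<in> carrier (Gamma p).
             (\<lambda>x. g \<otimes>\<^bsub>Gamma p\<^esub> x \<otimes>\<^bsub>Gamma p\<^esub> inv\<^bsub>Gamma p\<^esub> g) ` Cp p
             = generate (Gamma p) {(t, 0) \<otimes>\<^bsub>Gamma p\<^esub> gen_a}))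
    \<and> center (Gamma p) = generate (Gamma p) {zeta p}
    \<and> center (Gamma p) \<subseteq> torus p \<times> {0}
    \<and> normalizer (Gamma p) (Cp p) = center (Gamma p) <#>\<^bsub>Gamma p\<^esub> Cp p
    \<and> center (Gamma p) \<inter> Cp p = {\<one>\<^bsub>Gamma p\<^esub>}"
proof -
  have p: "2 \<le> p" using assms prime_ge_2_nat by blast
  show ?thesis
    using group_Gamma[OF p] ord_ta[OF assms] conj_exists[OF _ p] center_eq[OF p] center_torus[OF p]
      normalizer_eq[OF p] center_Cp[OF p]
    by blast
qed

end
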